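(* Let $A\subseteq B$ be an extension of commutative rings which has a retraction, i.e. there is a ring morphism $f:B\to A$ with $f(a)=a$ for all $a\in A$. Then $\mathfrak{C}(A,B)=0$.
   Context: All rings are commutative with identity. For an extension of rings $A\subseteq B$ and $A$-submodules $L,L'$ of $B$, $LL'$ is the $A$-submodule of finite sums $\sum x_ky_k$ with $x_k\in L,y_k\in L'$. An $A$-submodule $L$ of $B$ is an invertible ideal of $A\subseteq B$ if $LL'=A$ for some $A$-submodule $L'$ of $B$; these form an abelian group $\mathscr{G}(A,B)$ under multiplication, and $\mathfrak{C}(A,B)=\mathscr{G}(A,B)/\{Ax: x\in B^\ast\}$. *)

theory Defs
  imports Main
begin

text \<open>The ring B is modelled as a type 'b of class comm_ring_1; the subring A is a subset of it.\<close>

definition is_subring :: "'b::comm_ring_1 set \<Rightarrow> bool" where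
  "is_subring A \<longleftrightarrow> 0 \<in> A \<and> 1 \<in> A \<and> (\<forall>x\<in>A. \<forall>y\<in>A. x + y \<in> A \<and> x - y \<in> A \<and> x * y \<in> A)"

definition is_submodule :: "'b::comm_ring_1 set \<Rightarrow> 'b set \<Rightarrow> bool" where
  "is_submodule A L \<longleftrightarrow> 0 \<in> L \<and> (\<forall>x\<in>L. \<forall>y\<in>L. x + y \<in> L) \<and> (\<forall>a\<in>A. \<forall>x\<in>L. a * x \<in> L)"

definition submod_mult :: "'b::comm_ring_1 set \<Rightarrow> 'b set \<Rightarrow> 'b set" where
  "submod_mult L M = {(\<Sum>k<n. x k * y k) | (n::nat) x y. \<forall>k<n. x k \<in> L \<and> y k \<in> M}"

definition invertible_ideal :: "'b::comm_ring_1 set \<Rightarrow> 'b set \<Rightarrow> bool" where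
  "invertible_ideal A L \<longleftrightarrow> is_submodule A L \<and> (\<exists>M. is_submodule A M \<and> submod_mult L M = A)"

definition cyc :: "'b::comm_ring_1 set \<Rightarrow> 'b \<Rightarrow> 'b set" where
  "cyc A x = {a * x | a. a \<in> A}"

text \<open>C(A,B) = G(A,B) / {Ax : x unit of B} is trivial iff every invertible ideal is of that form.\<close>
definition class_group_trivial :: "'b::comm_ring_1 set \<Rightarrow> bool" where
  "class_group_trivial A \<longleftrightarrow> (\<forall>L. invertible_ideal A L \<longrightarrow> (\<exists>x. x dvd 1 \<and> L = cyc A x))"

end

theory Submission
  imports Defs
begin

lemma submod_lin_comb:
  fixes n :: nat
  assumes "is_submodule A L" "\<forall>k<n. c k \<in> A \<and> x k \<in> L"
  shows "(\<Sum>k<n. c k * x k) \<in> L"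
  using assms(2)
proof (induction n)
  case 0 then show ?case using assms(1) by (simp add: is_submodule_def)
next
  case (Suc n)
  then have "(\<Sum>k<n. c k * x k) \<in> L" by simp
  moreover have "c n * x n \<in> L" using Suc.prems assms(1) by (simp add: is_submodule_def)
  ultimately show ?case using assms(1) by (simp add: is_submodule_def)
qed

theorem theorem5p10:
  fixes A :: "'b::comm_ring_1 set" and f :: "'b \<Rightarrow> 'b"
  assumes "is_subring A"
    and "\<forall>x. f x \<in> A"
    and "\<forall>x y. f (x + y) = f x + f y"
    and "\<forall>x y. f (x * y) = f x * f y"
    and "f 1 = 1"
    and "\<forall>a\<in>A. f a = a"
  shows "class_group_trivial A"
  unfolding class_group_trivial_def
proof (intro allI impI)
  fix L assume inv: "invertible_ideal A L"
  then obtain M where LS: "is_submodule A L" and MS: "is_submodule A M"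
    and LM: "submod_mult L M = A" unfolding invertible_ideal_def by blast
  have "1 \<in> A" using assms(1) by (simp add: is_subring_def)
  then have "1 \<in> submod_mult L M" using LM by simp
  then have "\<exists>(n::nat) x y. (\<forall>k<n. x k \<in> L \<and> y k \<in> M) \<and> 1 = (\<Sum>k<n. x k * y k)"
    unfolding submod_mult_def mem_Collect_eq by blast
  then obtain n x y where H: "(\<forall>k<(n::nat). x k \<in> L \<and> y k \<in> M) \<and> 1 = (\<Sum>k<n. x k * y k)"
    by (elim exE) (rule that)
  then have xy: "\<forall>k<(n::nat). x k \<in> L \<and> y k \<in> M" and one: "1 = (\<Sum>k<n. x k * y k)"
    by (rule conjunct1, rule conjunct2)
  define u where "u = (\<Sum>k<n. f (y k) * x k)"
  have uL: "u \<in> L" unfolding u_def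
    by (rule submod_lin_comb[OF LS]) (use xy assms(2) in simp)
  have key: "l = f l * u" if "l \<in> L" for l
  proof -
    have prod: "l * y k = f l * f (y k)" if "k < n" for k
    proof -
      have "(\<Sum>j<(1::nat). (\<lambda>_. l) j * (\<lambda>_. y k) j) \<in> submod_mult L M"
        unfolding submod_mult_def mem_Collect_eq
        apply (rule exI[of _ 1], rule exI[of _ "\<lambda>_. l"], rule exI[of _ "\<lambda>_. y k"])
        using \<open>l \<in> L\<close> xy \<open>k < n\<close> by simp
      then have "l * y k \<in> A" using LM by simp
      then have "f (l * y k) = l * y k" using assms(6) by blast
      then show ?thesis using assms(4) by simp
    qed
    have "l = l * 1" by simp
    also have "\<dots> = (\<Sum>k<n. x k * (l * y k))" by (simp add: one sum_distrib_left algebra_simps)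
    also have "\<dots> = (\<Sum>k<n. x k * (f l * f (y k)))" using prod by simp
    also have "\<dots> = f l * u" by (simp add: u_def sum_distrib_left algebra_simps)
    finally show ?thesis .
  qed
  have "1 = (\<Sum>k<n. (f (x k) * u) * y k)" unfolding one
  proof (rule sum.cong)
    fix k assume "k \<in> {..<n}"
    then have "x k \<in> L" using xy by simp
    then have "x k = f (x k) * u" by (rule key)
    then show "x k * y k = f (x k) * u * y k" by (rule arg_cong)
  qed simp
  also have "\<dots> = u * (\<Sum>k<n. f (x k) * y k)" by (simp add: sum_distrib_left algebra_simps)
  finally have "u dvd 1" by (metis dvdI)
  moreover have "L = cyc A u"
  proof
    show "L \<subseteq> cyc A u"
    proof
      fix l assume "l \<in> L"
      then have "l = f l * u" by (rule key)
      moreover have "f l \<in> A" using assms(2) by simp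
      ultimately show "l \<in> cyc A u" unfolding cyc_def by blast
    qed
    show "cyc A u \<subseteq> L" unfolding cyc_def using uL LS by (auto simp: is_submodule_def)
  qed
  ultimately show "\<exists>x. x dvd 1 \<and> L = cyc A x" by blast
qed

end
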